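(* Let $P$ be a small $\mathcal L$-substructure of $\mathfrak D$. Then there exists a small $\mathcal L$-substructure $P^*$ of $\mathfrak D$ with $P\subseteq P^*$ and $P^*$ PAC.
   Context: $\mathfrak D$ is a $\kappa_{\mathfrak D}$-saturated, $\kappa_{\mathfrak D}$-strongly homogeneous $\mathcal L$-structure ("small": cardinality $<\kappa_{\mathfrak D}$; no further assumptions on its theory are needed). Regular: for small $E\subseteq A\subseteq\mathfrak D$, $E\subseteq A$ is regular if $\mathrm{dcl}^{\mathfrak D}_{\mathcal L}(A)\cap\mathrm{acl}^{\mathfrak D}_{\mathcal L}(E)=\mathrm{dcl}^{\mathfrak D}_{\mathcal L}(E)$. PAC: a small $\mathcal L$-substructure $N$ of $\mathfrak D$ is PAC if for every small $\mathcal L$-substructure $N'\supseteq N$ of $\mathfrak D$ with $N\subseteq N'$ regular, $N$ is existentially closed in $N'$ (every quantifier-free $\mathcal L$-formula with parameters in $N$ having a solution in $N'$ has one in $N$). *)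

theory Defs
  imports Main
begin

text \<open>A language L is given by function symbols of type 'f and relation symbols of
type 'r together with their arities (constants = 0-ary function symbols).
The big structure D has universe UNIV of type 'a.\<close>

record ('f, 'r, 'a) struc =
  fun_arity :: "'f \<Rightarrow> nat"
  rel_arity :: "'r \<Rightarrow> nat"
  fun_int   :: "'f \<Rightarrow> 'a list \<Rightarrow> 'a"
  rel_int   :: "'r \<Rightarrow> 'a list \<Rightarrow> bool"

datatype ('f, 'a) trm = Var nat | Par 'a | App 'f "('f, 'a) trm list"

datatype ('f, 'r, 'a) fm =
    FEq "('f, 'a) trm" "('f, 'a) trm"
  | FRel 'r "('f, 'a) trm list"
  | FNeg "('f, 'r, 'a) fm"
  | FConj "('f, 'r, 'a) fm" "('f, 'r, 'a) fm"
  | FEx nat "('f, 'r, 'a) fm"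

fun evalt :: "('f, 'r, 'a) struc \<Rightarrow> (nat \<Rightarrow> 'a) \<Rightarrow> ('f, 'a) trm \<Rightarrow> 'a" where
  "evalt M e (Var v) = e v"
| "evalt M e (Par a) = a"
| "evalt M e (App f ts) = fun_int M f (map (evalt M e) ts)"

fun sat :: "('f, 'r, 'a) struc \<Rightarrow> (nat \<Rightarrow> 'a) \<Rightarrow> ('f, 'r, 'a) fm \<Rightarrow> bool" where
  "sat M e (FEq s t) = (evalt M e s = evalt M e t)"
| "sat M e (FRel r ts) = rel_int M r (map (evalt M e) ts)"
| "sat M e (FNeg \<phi>) = (\<not> sat M e \<phi>)"
| "sat M e (FConj \<phi> \<psi>) = (sat M e \<phi> \<and> sat M e \<psi>)"
| "sat M e (FEx x \<phi>) = (\<exists>b. sat M (e(x := b)) \<phi>)"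

fun wf_trm :: "('f, 'r, 'a) struc \<Rightarrow> ('f, 'a) trm \<Rightarrow> bool" where
  "wf_trm M (Var v) = True"
| "wf_trm M (Par a) = True"
| "wf_trm M (App f ts) = (length ts = fun_arity M f \<and> (\<forall>t\<in>set ts. wf_trm M t))"

fun wf_fm :: "('f, 'r, 'a) struc \<Rightarrow> ('f, 'r, 'a) fm \<Rightarrow> bool" where
  "wf_fm M (FEq s t) = (wf_trm M s \<and> wf_trm M t)"
| "wf_fm M (FRel r ts) = (length ts = rel_arity M r \<and> (\<forall>t\<in>set ts. wf_trm M t))"
| "wf_fm M (FNeg \<phi>) = wf_fm M \<phi>"
| "wf_fm M (FConj \<phi> \<psi>) = (wf_fm M \<phi> \<and> wf_fm M \<psi>)"
| "wf_fm M (FEx x \<phi>) = wf_fm M \<phi>"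

fun qf :: "('f, 'r, 'a) fm \<Rightarrow> bool" where
  "qf (FEq s t) = True"
| "qf (FRel r ts) = True"
| "qf (FNeg \<phi>) = qf \<phi>"
| "qf (FConj \<phi> \<psi>) = (qf \<phi> \<and> qf \<psi>)"
| "qf (FEx x \<phi>) = False"

fun fvt :: "('f, 'a) trm \<Rightarrow> nat set" where
  "fvt (Var v) = {v}"
| "fvt (Par a) = {}"
| "fvt (App f ts) = (\<Union>t\<in>set ts. fvt t)"

fun fv :: "('f, 'r, 'a) fm \<Rightarrow> nat set" where
  "fv (FEq s t) = fvt s \<union> fvt t"
| "fv (FRel r ts) = (\<Union>t\<in>set ts. fvt t)"
| "fv (FNeg \<phi>) = fv \<phi>"
| "fv (FConj \<phi> \<psi>) = fv \<phi> \<union> fv \<psi>"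
| "fv (FEx x \<phi>) = fv \<phi> - {x}"

fun parst :: "('f, 'a) trm \<Rightarrow> 'a set" where
  "parst (Var v) = {}"
| "parst (Par a) = {a}"
| "parst (App f ts) = (\<Union>t\<in>set ts. parst t)"

fun pars :: "('f, 'r, 'a) fm \<Rightarrow> 'a set" where
  "pars (FEq s t) = parst s \<union> parst t"
| "pars (FRel r ts) = (\<Union>t\<in>set ts. parst t)"
| "pars (FNeg \<phi>) = pars \<phi>"
| "pars (FConj \<phi> \<psi>) = pars \<phi> \<union> pars \<psi>"
| "pars (FEx x \<phi>) = pars \<phi>"

fun mapt :: "('a \<Rightarrow> 'a) \<Rightarrow> ('f, 'a) trm \<Rightarrow> ('f, 'a) trm" where
  "mapt g (Var v) = Var v"
| "mapt g (Par a) = Par (g a)"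
| "mapt g (App f ts) = App f (map (mapt g) ts)"

fun mapf :: "('a \<Rightarrow> 'a) \<Rightarrow> ('f, 'r, 'a) fm \<Rightarrow> ('f, 'r, 'a) fm" where
  "mapf g (FEq s t) = FEq (mapt g s) (mapt g t)"
| "mapf g (FRel r ts) = FRel r (map (mapt g) ts)"
| "mapf g (FNeg \<phi>) = FNeg (mapf g \<phi>)"
| "mapf g (FConj \<phi> \<psi>) = FConj (mapf g \<phi>) (mapf g \<psi>)"
| "mapf g (FEx x \<phi>) = FEx x (mapf g \<phi>)"

text \<open>kappa is a cardinal given as a cardinal order; small means cardinality < kappa.\<close>
definition small :: "'k rel \<Rightarrow> 'a set \<Rightarrow> bool" where
  "small kappa A \<longleftrightarrow> (card_of A, kappa) \<in> ordLess"

definition formula1_over :: "('f, 'r, 'a) struc \<Rightarrow> 'a set \<Rightarrow> ('f, 'r, 'a) fm \<Rightarrow> bool" where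
  "formula1_over M A \<phi> \<longleftrightarrow> wf_fm M \<phi> \<and> pars \<phi> \<subseteq> A \<and> fv \<phi> \<subseteq> {0}"

definition saturated :: "'k rel \<Rightarrow> ('f, 'r, 'a) struc \<Rightarrow> bool" where
  "saturated kappa M \<longleftrightarrow>
     (\<forall>A \<Phi>. small kappa A \<and> (\<forall>\<phi>\<in>\<Phi>. formula1_over M A \<phi>) \<and>
        (\<forall>\<Psi>\<subseteq>\<Phi>. finite \<Psi> \<longrightarrow> (\<exists>c. \<forall>\<phi>\<in>\<Psi>. sat M (\<lambda>_. c) \<phi>))
        \<longrightarrow> (\<exists>c. \<forall>\<phi>\<in>\<Phi>. sat M (\<lambda>_. c) \<phi>))"

definition elementary_map :: "('f, 'r, 'a) struc \<Rightarrow> 'a set \<Rightarrow> ('a \<Rightarrow> 'a) \<Rightarrow> bool" where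
  "elementary_map M A g \<longleftrightarrow>
     (\<forall>\<phi>. wf_fm M \<phi> \<and> pars \<phi> \<subseteq> A \<and> fv \<phi> = {} \<longrightarrow>
        (\<forall>e. sat M e \<phi> \<longleftrightarrow> sat M e (mapf g \<phi>)))"

definition automorphism :: "('f, 'r, 'a) struc \<Rightarrow> ('a \<Rightarrow> 'a) \<Rightarrow> bool" where
  "automorphism M \<sigma> \<longleftrightarrow> bij \<sigma> \<and>
     (\<forall>f xs. length xs = fun_arity M f \<longrightarrow> \<sigma> (fun_int M f xs) = fun_int M f (map \<sigma> xs)) \<and>
     (\<forall>r xs. length xs = rel_arity M r \<longrightarrow> (rel_int M r (map \<sigma> xs) \<longleftrightarrow> rel_int M r xs))"

definition strongly_homogeneous :: "'k rel \<Rightarrow> ('f, 'r, 'a) struc \<Rightarrow> bool" where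
  "strongly_homogeneous kappa M \<longleftrightarrow>
     (\<forall>A g. small kappa A \<and> elementary_map M A g \<longrightarrow>
        (\<exists>\<sigma>. automorphism M \<sigma> \<and> (\<forall>a\<in>A. \<sigma> a = g a)))"

definition dcl :: "('f, 'r, 'a) struc \<Rightarrow> 'a set \<Rightarrow> 'a set" where
  "dcl M A = {b. \<exists>\<phi>. formula1_over M A \<phi> \<and> {c. sat M (\<lambda>_. c) \<phi>} = {b}}"

definition acl :: "('f, 'r, 'a) struc \<Rightarrow> 'a set \<Rightarrow> 'a set" where
  "acl M A = {b. \<exists>\<phi>. formula1_over M A \<phi> \<and> finite {c. sat M (\<lambda>_. c) \<phi>} \<and> sat M (\<lambda>_. b) \<phi>}"

definition substructure :: "('f, 'r, 'a) struc \<Rightarrow> 'a set \<Rightarrow> bool" where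
  "substructure M N \<longleftrightarrow>
     (\<forall>f xs. length xs = fun_arity M f \<and> set xs \<subseteq> N \<longrightarrow> fun_int M f xs \<in> N)"

definition regular :: "('f, 'r, 'a) struc \<Rightarrow> 'a set \<Rightarrow> 'a set \<Rightarrow> bool" where
  "regular M E A \<longleftrightarrow> dcl M A \<inter> acl M E = dcl M E"

definition ex_closed :: "('f, 'r, 'a) struc \<Rightarrow> 'a set \<Rightarrow> 'a set \<Rightarrow> bool" where
  "ex_closed M N N' \<longleftrightarrow>
     (\<forall>\<phi>. wf_fm M \<phi> \<and> qf \<phi> \<and> pars \<phi> \<subseteq> N \<and>
        (\<exists>e. (\<forall>v\<in>fv \<phi>. e v \<in> N') \<and> sat M e \<phi>) \<longrightarrow>
        (\<exists>e. (\<forall>v\<in>fv \<phi>. e v \<in> N) \<and> sat M e \<phi>))"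

definition PAC :: "'k rel \<Rightarrow> ('f, 'r, 'a) struc \<Rightarrow> 'a set \<Rightarrow> bool" where
  "PAC kappa M N \<longleftrightarrow> small kappa N \<and> substructure M N \<and>
     (\<forall>N'. small kappa N' \<and> substructure M N' \<and> N \<subseteq> N' \<and> regular M N N'
        \<longrightarrow> ex_closed M N N')"

end

theory Submission
  imports Defs
begin

unbundle cardinal_syntax

type_synonym ('f, 'r, 'a) tok = "(nat \<times> nat) + 'a + ('f \<times> nat) + ('r \<times> nat)"
type_synonym ('f, 'r, 'a) item = "('f, 'a) trm + ('f, 'r, 'a) fm"

fun eqop :: "('f, 'r, 'a) item list \<Rightarrow> ('f, 'r, 'a) item list" where
  "eqop (Inl t # Inl s # st) = Inr (FEq s t) # st"
| "eqop st = st"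

fun negop :: "('f, 'r, 'a) item list \<Rightarrow> ('f, 'r, 'a) item list" where
  "negop (Inr p # st) = Inr (FNeg p) # st"
| "negop st = st"

fun conjop :: "('f, 'r, 'a) item list \<Rightarrow> ('f, 'r, 'a) item list" where
  "conjop (Inr q # Inr p # st) = Inr (FConj p q) # st"
| "conjop st = st"

fun exop :: "nat \<Rightarrow> ('f, 'r, 'a) item list \<Rightarrow> ('f, 'r, 'a) item list" where
  "exop x (Inr p # st) = Inr (FEx x p) # st"
| "exop x st = st"

fun stepk :: "('f, 'r, 'a) tok \<Rightarrow> ('f, 'r, 'a) item list \<Rightarrow> ('f, 'r, 'a) item list" where
  "stepk (Inl (c, v)) st =
     (if c = 0 then Inl (Var v) # st else if c = 1 then eqop st else if c = 2 then negop st
      else if c = 3 then conjop st else exop v st)"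
| "stepk (Inr (Inl a)) st = Inl (Par a) # st"
| "stepk (Inr (Inr (Inl (f, n)))) st = Inl (App f (rev (map projl (take n st)))) # drop n st"
| "stepk (Inr (Inr (Inr (r, n)))) st = Inr (FRel r (rev (map projl (take n st)))) # drop n st"

fun enct :: "('f, 'a) trm \<Rightarrow> ('f, 'r, 'a) tok list" where
  "enct (Var v) = [Inl (0, v)]"
| "enct (Par a) = [Inr (Inl a)]"
| "enct (App f ts) = concat (map enct ts) @ [Inr (Inr (Inl (f, length ts)))]"

fun encf :: "('f, 'r, 'a) fm \<Rightarrow> ('f, 'r, 'a) tok list" where
  "encf (FEq s t) = enct s @ enct t @ [Inl (1, 0)]"
| "encf (FRel r ts) = concat (map enct ts) @ [Inr (Inr (Inr (r, length ts)))]"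
| "encf (FNeg p) = encf p @ [Inl (2, 0)]"
| "encf (FConj p q) = encf p @ encf q @ [Inl (3, 0)]"
| "encf (FEx x p) = encf p @ [Inl (4, x)]"

lemma enc_list:
  assumes "\<And>t st. t \<in> set ts \<Longrightarrow> fold stepk (enct t :: ('f, 'r, 'a) tok list) st = Inl t # st"
  shows "fold stepk (concat (map enct ts) :: ('f, 'r, 'a) tok list) st = rev (map Inl ts) @ st"
  using assms
proof (induction ts arbitrary: st)
  case Nil then show ?case by simp
next
  case (Cons a ts)
  then show ?case by simp
qed

lemma take_helper:
  "rev (map projl (take (length ts) (rev (map Inl ts) @ st))) = ts"
  "drop (length ts) (rev (map Inl ts) @ st) = st"
proof -
  have "take (length ts) (rev (map Inl ts) @ st) = rev (map Inl ts)" by simp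
  moreover have "map projl (rev (map Inl ts)) = rev ts" by (induct ts) auto
  ultimately show "rev (map projl (take (length ts) (rev (map Inl ts) @ st))) = ts" by (metis rev_rev_ident)
  show "drop (length ts) (rev (map Inl ts) @ st) = st" by simp
qed

lemma enct_fold: "fold stepk (enct t :: ('f, 'r, 'a) tok list) st = Inl t # st"
proof (induction t arbitrary: st)
  case (App f ts)
  have "fold stepk (concat (map enct ts) :: ('f, 'r, 'a) tok list) st = rev (map Inl ts) @ st"
    by (rule enc_list) (use App in auto)
  then show ?case by (simp only: enct.simps encf.simps fold_append comp_def fold_Cons fold_Nil id_def stepk.simps take_helper)
qed auto

lemma encf_fold: "fold stepk (encf p :: ('f, 'r, 'a) tok list) st = Inr p # st"
proof (induction p arbitrary: st)
  case (FRel r ts)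
  have "fold stepk (concat (map enct ts) :: ('f, 'r, 'a) tok list) st = rev (map Inl ts) @ st"
    by (rule enc_list) (rule enct_fold)
  then show ?case by (simp only: enct.simps encf.simps fold_append comp_def fold_Cons fold_Nil id_def stepk.simps take_helper)
qed (auto simp: enct_fold)

definition dec :: "('f, 'r, 'a) tok list \<Rightarrow> ('f, 'r, 'a) fm" where
  "dec l = projr (hd (fold stepk l []))"

lemma dec_encf: "dec (encf p) = p"
  by (simp add: dec_def encf_fold)

definition tokS :: "'a set \<Rightarrow> ('f, 'r, 'a) tok set" where
  "tokS S = {k. \<forall>a. k = Inr (Inl a) \<longrightarrow> a \<in> S}"

lemma tokS_simps [simp]:
  "Inl x \<in> tokS S" "(Inr (Inl a) \<in> tokS S) = (a \<in> S)" "Inr (Inr y) \<in> tokS S"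
  by (auto simp: tokS_def)

lemma enct_tokS: "parst t \<subseteq> S \<Longrightarrow> set (enct t :: ('f, 'r, 'a) tok list) \<subseteq> tokS S"
proof (induction t)
  case (App f ts)
  then have "\<forall>t\<in>set ts. set (enct t :: ('f, 'r, 'a) tok list) \<subseteq> tokS S" by auto
  then show ?case by auto
qed auto

lemma encf_tokS: "pars p \<subseteq> S \<Longrightarrow> set (encf p :: ('f, 'r, 'a) tok list) \<subseteq> tokS S"
proof (induction p)
  case (FEq s t)
  then have "set (enct s :: ('f, 'r, 'a) tok list) \<subseteq> tokS S" "set (enct t :: ('f, 'r, 'a) tok list) \<subseteq> tokS S"
    by (auto intro!: enct_tokS)
  then show ?case by auto
next
  case (FRel r ts)
  then have "\<forall>t\<in>set ts. set (enct t :: ('f, 'r, 'a) tok list) \<subseteq> tokS S" by (auto intro!: enct_tokS)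
  then show ?case by auto
qed auto

lemma finite_parst: "finite (parst t)"
  by (induction t) auto

lemma finite_pars: "finite (pars p)"
  by (induction p) (auto simp: finite_parst)


lemma fin_le_inf: "finite F \<Longrightarrow> \<not> finite C \<Longrightarrow> |F| \<le>o |C|"
  by (rule ordLess_imp_ordLeq, rule finite_ordLess_infinite)
     (auto simp: Field_card_of card_of_well_order_on)

lemma le_trans_sub: "A \<subseteq> B \<Longrightarrow> |B| \<le>o |C| \<Longrightarrow> |A| \<le>o |C|"
  using card_of_mono1 ordLeq_transitive by blast

lemma le_image: "|A| \<le>o |C| \<Longrightarrow> |f ` A| \<le>o |C|"
  using card_of_image ordLeq_transitive by blast

lemma le_Un: "\<not> finite C \<Longrightarrow> |A| \<le>o |C| \<Longrightarrow> |B| \<le>o |C| \<Longrightarrow> |A \<union> B| \<le>o |C|"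
  by (rule card_of_Un_ordLeq_infinite_Field) (auto simp: Field_card_of card_of_card_order_on)

lemma le_Times: "\<not> finite C \<Longrightarrow> |A| \<le>o |C| \<Longrightarrow> |B| \<le>o |C| \<Longrightarrow> |A \<times> B| \<le>o |C|"
  by (rule card_of_Times_ordLeq_infinite_Field) (auto simp: Field_card_of card_of_card_order_on)

lemma nat_le: "\<not> finite C \<Longrightarrow> |UNIV :: nat set| \<le>o |C|"
  using infinite_iff_card_of_nat by blast

lemma lists_bound:
  assumes inf: "\<not> finite C" and A: "|A| \<le>o |C|"
  shows "|lists A| \<le>o |C|"
proof -
  define L where "L n = {xs \<in> lists A. length xs = n}" for n
  have Ln: "|L n| \<le>o |C|" for n
  proof (induction n)
    case 0
    have "L 0 = {[]}" by (auto simp: L_def)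
    then show ?case by (simp add: fin_le_inf inf)
  next
    case (Suc n)
    have "L (Suc n) \<subseteq> (\<lambda>(x, xs). x # xs) ` (A \<times> L n)"
    proof
      fix ys assume "ys \<in> L (Suc n)"
      then obtain x xs where "ys = x # xs" "x \<in> A" "xs \<in> L n"
        by (cases ys) (auto simp: L_def)
      then show "ys \<in> (\<lambda>(x, xs). x # xs) ` (A \<times> L n)" by force
    qed
    moreover have "|(\<lambda>(x, xs). x # xs) ` (A \<times> L n)| \<le>o |C|"
      by (rule le_image, rule le_Times[OF inf A Suc])
    ultimately show ?case by (rule le_trans_sub)
  qed
  have "lists A = (\<Union>n. L n)" by (auto simp: L_def)
  moreover have "|\<Union>n. L n| \<le>o |C|"
    by (rule card_of_UNION_ordLeq_infinite[OF inf nat_le[OF inf]]) (use Ln in auto)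
  ultimately show ?thesis by simp
qed

lemma tokS_bound:
  assumes inf: "\<not> finite C" and S: "|S| \<le>o |C|"
    and F: "|UNIV :: 'f set| \<le>o |C|" and R: "|UNIV :: 'r set| \<le>o |C|"
  shows "|tokS S :: ('f, 'r, 'a) tok set| \<le>o |C|"
proof -
  have sub: "(tokS S :: ('f, 'r, 'a) tok set) \<subseteq>
     (Inl ` (UNIV \<times> UNIV) \<union> (Inr \<circ> Inl) ` S) \<union>
     ((Inr \<circ> Inr \<circ> Inl) ` (UNIV \<times> UNIV) \<union> (Inr \<circ> Inr \<circ> Inr) ` (UNIV \<times> UNIV))"
  proof
    fix k :: "('f, 'r, 'a) tok" assume "k \<in> tokS S"
    then show "k \<in> (Inl ` (UNIV \<times> UNIV) \<union> (Inr \<circ> Inl) ` S) \<union>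
     ((Inr \<circ> Inr \<circ> Inl) ` (UNIV \<times> UNIV) \<union> (Inr \<circ> Inr \<circ> Inr) ` (UNIV \<times> UNIV))"
    proof (cases k)
      case (Inl x) then show ?thesis by auto
    next
      case (Inr y)
      show ?thesis
      proof (cases y)
        case (Inl a) then show ?thesis using Inr \<open>k \<in> tokS S\<close> by (auto simp: tokS_def)
      next
        case (Inr z)
        then show ?thesis using \<open>k = Inr y\<close> by (cases z) auto
      qed
    qed
  qed
  have N: "|UNIV :: nat set| \<le>o |C|" by (rule nat_le[OF inf])
  show ?thesis
    apply (rule le_trans_sub[OF sub])
    apply (rule le_Un[OF inf]; rule le_Un[OF inf])
       apply (rule le_image, rule le_Times[OF inf N N])
      apply (rule le_image, rule S)
     apply (rule le_image, rule le_Times[OF inf F N])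
    apply (rule le_image, rule le_Times[OF inf R N])
    done
qed

lemma FmS_bound:
  assumes inf: "\<not> finite C" and S: "|S| \<le>o |C|"
    and F: "|UNIV :: 'f set| \<le>o |C|" and R: "|UNIV :: 'r set| \<le>o |C|"
  shows "|{p :: ('f, 'r, 'a) fm. pars p \<subseteq> S}| \<le>o |C|"
proof -
  have "{p :: ('f, 'r, 'a) fm. pars p \<subseteq> S} \<subseteq> dec ` lists (tokS S :: ('f, 'r, 'a) tok set)"
  proof
    fix p :: "('f, 'r, 'a) fm" assume "p \<in> {p. pars p \<subseteq> S}"
    then have "encf p \<in> lists (tokS S :: ('f, 'r, 'a) tok set)"
      using encf_tokS[of p S] by (auto simp: in_lists_conv_set)
    then show "p \<in> dec ` lists (tokS S :: ('f, 'r, 'a) tok set)"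
      using dec_encf[of p] by force
  qed
  moreover have "|dec ` lists (tokS S :: ('f, 'r, 'a) tok set)| \<le>o |C|"
    by (rule le_image, rule lists_bound[OF inf], rule tokS_bound[OF inf S F R])
  ultimately show ?thesis by (rule le_trans_sub)
qed

definition pstep :: "('f, 'r, 'a) struc \<Rightarrow> 'a set \<Rightarrow> 'a set" where
  "pstep M S = S \<union> (\<lambda>(f, xs). fun_int M f xs) ` (UNIV \<times> lists S) \<union>
     (\<Union>p\<in>{p :: ('f, 'r, 'a) fm. pars p \<subseteq> S}. (SOME e. sat M e p) ` fv p)"

lemma pstep_bound:
  assumes inf: "\<not> finite C" and S: "|S| \<le>o |C|"
    and F: "|UNIV :: 'f set| \<le>o |C|" and R: "|UNIV :: 'r set| \<le>o |C|"
  shows "|pstep (M :: ('f, 'r, 'a) struc) S| \<le>o |C|"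
proof -
  have N: "|UNIV :: nat set| \<le>o |C|" by (rule nat_le[OF inf])
  have U: "|\<Union>p\<in>{p :: ('f, 'r, 'a) fm. pars p \<subseteq> S}. (SOME e. sat M e p) ` fv p| \<le>o |C|"
    apply (rule card_of_UNION_ordLeq_infinite[OF inf FmS_bound[OF inf S F R]])
    apply (intro ballI le_image)
    apply (rule le_trans_sub[OF subset_UNIV N])
    done
  show ?thesis unfolding pstep_def
    apply (rule le_Un[OF inf], rule le_Un[OF inf], rule S)
     apply (rule le_image, rule le_Times[OF inf F lists_bound[OF inf S]])
    apply (rule U)
    done
qed

lemma chain_finite:
  assumes mono: "\<And>n. X n \<subseteq> X (Suc n)"
  shows "finite F \<Longrightarrow> F \<subseteq> (\<Union>n. X n) \<Longrightarrow> \<exists>n. F \<subseteq> X n"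
proof (induction F rule: finite_induct)
  case empty then show ?case by simp
next
  case (insert x F)
  then obtain n m where n: "F \<subseteq> X n" and m: "x \<in> X m" by auto
  have "X n \<subseteq> X (max n m)" "X m \<subseteq> X (max n m)"
    using lift_Suc_mono_le[of X, OF mono] by auto
  then show ?case using n m by blast
qed

theorem mainTheorem20:
  fixes M :: "('f, 'r, 'a) struc" and kappa :: "'k rel" and P :: "'a set"
  assumes "Card_order kappa"
    and "(card_of (UNIV :: nat set), kappa) \<in> ordLess"
    and "(card_of (UNIV :: 'f set), kappa) \<in> ordLess"
    and "(card_of (UNIV :: 'r set), kappa) \<in> ordLess"
    and "saturated kappa M"
    and "strongly_homogeneous kappa M"
    and "small kappa P"
    and "substructure M P"
  shows "\<exists>Ps. small kappa Ps \<and> substructure M Ps \<and> P \<subseteq> Ps \<and> PAC kappa M Ps"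
proof -
  note co = assms(1)
  have kinf: "\<not> finite (Field kappa)"
  proof -
    have "|UNIV :: nat set| \<le>o |Field kappa|"
      using ordLess_imp_ordLeq[OF ordLess_ordIso_trans[OF assms(2) ordIso_symmetric[OF card_of_Field_ordIso[OF co]]]] .
    then show ?thesis using infinite_iff_card_of_nat by blast
  qed
  define C where "C = (UNIV :: nat set) <+> (P <+> ((UNIV :: 'f set) <+> (UNIV :: 'r set)))"
  have Cless: "|C| <o kappa"
    unfolding C_def
    apply (rule card_of_Plus_ordLess_infinite_Field[OF kinf co assms(2)])
    apply (rule card_of_Plus_ordLess_infinite_Field[OF kinf co])
     apply (use assms(7) in \<open>simp add: small_def\<close>)
    apply (rule card_of_Plus_ordLess_infinite_Field[OF kinf co assms(3) assms(4)])
    done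
  have inf: "\<not> finite C"
  proof -
    have "|UNIV :: nat set| \<le>o |C|" unfolding C_def by (rule card_of_Plus1)
    then show ?thesis using infinite_iff_card_of_nat by blast
  qed
  have C2: "|P <+> ((UNIV :: 'f set) <+> (UNIV :: 'r set))| \<le>o |C|"
    unfolding C_def by (rule card_of_Plus2)
  have PC: "|P| \<le>o |C|" using ordLeq_transitive[OF card_of_Plus1 C2] .
  have C3: "|(UNIV :: 'f set) <+> (UNIV :: 'r set)| \<le>o |C|"
    using ordLeq_transitive[OF card_of_Plus2 C2] .
  have F: "|UNIV :: 'f set| \<le>o |C|" using ordLeq_transitive[OF card_of_Plus1 C3] .
  have R: "|UNIV :: 'r set| \<le>o |C|" using ordLeq_transitive[OF card_of_Plus2 C3] .
  define X where "X n = (pstep M ^^ n) P" for n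
  have Xs: "X (Suc n) = pstep M (X n)" for n by (simp add: X_def)
  have Xmono: "X n \<subseteq> X (Suc n)" for n by (auto simp: Xs pstep_def)
  have Xb: "|X n| \<le>o |C|" for n
    by (induction n) (auto simp: Xs PC X_def[of 0] intro: pstep_bound[OF inf _ F R])
  define N where "N = (\<Union>n. X n)"
  have Nb: "|N| \<le>o |C|" unfolding N_def
    by (rule card_of_UNION_ordLeq_infinite[OF inf nat_le[OF inf]]) (use Xb in auto)
  have smallN: "small kappa N" unfolding small_def using ordLeq_ordLess_trans[OF Nb Cless] .
  have PN: "P \<subseteq> N" unfolding N_def using X_def[of 0] by auto
  have subN: "substructure M N"
    unfolding substructure_def
  proof (intro allI impI)
    fix f xs assume "length xs = fun_arity M f \<and> set xs \<subseteq> N"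
    then obtain n where "set xs \<subseteq> X n"
      using chain_finite[of X, OF Xmono, of "set xs"] by (auto simp: N_def)
    then have "fun_int M f xs \<in> X (Suc n)" by (force simp: Xs pstep_def in_lists_conv_set)
    then show "fun_int M f xs \<in> N" by (auto simp: N_def)
  qed
  have exN: "ex_closed M N N'" for N'
    unfolding ex_closed_def
  proof (intro allI impI)
    fix p :: "('f, 'r, 'a) fm"
    assume a: "wf_fm M p \<and> qf p \<and> pars p \<subseteq> N \<and> (\<exists>e. (\<forall>v\<in>fv p. e v \<in> N') \<and> sat M e p)"
    then obtain n where n: "pars p \<subseteq> X n"
      using chain_finite[of X, OF Xmono, of "pars p"] finite_pars[of p] by (auto simp: N_def)
    let ?e = "SOME e. sat M e p"
    have "sat M ?e p" using a by (metis (mono_tags, lifting) someI)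
    moreover have "?e ` fv p \<subseteq> X (Suc n)" using n by (auto simp: Xs pstep_def)
    ultimately show "\<exists>e. (\<forall>v\<in>fv p. e v \<in> N) \<and> sat M e p" by (auto simp: N_def)
  qed
  show ?thesis
    unfolding PAC_def using smallN subN PN exN by blast
qed

end
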